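(* Let $G = N \rtimes H$ with $N, H$ finite abelian groups. Let $P_N$ be the idempotent eigenbasis of $\mathbb{C}[N]$, let $\mathcal{O}_\alpha$ be an $H$-orbit in $P_N$ (under conjugation), $H_\alpha$ the stabilizer in $H$ of an element of $\mathcal{O}_\alpha$, and $\{u_1,\dots,u_{|H_\alpha|}\}$ the idempotent eigenbasis of $\mathbb{C}[H_\alpha]$. Then for every $v_i \in \mathcal{O}_\alpha$ and every $1 \le p \le |H_\alpha|$, the element $v_iu_p$ is a primitive idempotent of $\mathbb{C}[G]$.
   Context: $N$ is a normal subgroup and $H$ acts on $N$ by conjugation, $G = NH$, $N\cap H = \{e\}$; $\mathbb{C}[N]$, $\mathbb{C}[H_\alpha]$ are regarded as subalgebras of $\mathbb{C}[G]$. For a finite abelian group $K$, the idempotent eigenbasis of $\mathbb{C}[K]$ is the unique basis $\{J_1,\dots,J_{|K|}\}$ of $\mathbb{C}[K]$ consisting of simultaneous eigenvectors of left multiplication by all elements of $\mathbb{C}[K]$ and satisfying $J_p^2 = J_p$, $J_pJ_q = 0$ for $p\neq q$. Conjugation by $h\in H$ is an algebra automorphism of $\mathbb{C}[N]$ and therefore permutes $P_N$; since $H$ is abelian all elements of an orbit have the same stabilizer. An idempotent $u$ is primitive if it cannot be written as $u = u_1+u_2$ with $u_1,u_2$ nonzero idempotents satisfying $u_1u_2=u_2u_1=0$. *)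

theory Defs
  imports "HOL-Algebra.Algebra"
begin

text \<open>The complex group algebra of a finite group G is modelled as complex-valued
functions on the carrier; C[K] for a subgroup K is the set of functions supported on K.\<close>

definition grp_alg :: "('a, 'b) monoid_scheme \<Rightarrow> 'a set \<Rightarrow> ('a \<Rightarrow> complex) set" where
  "grp_alg G K = {f. \<forall>x. x \<notin> K \<longrightarrow> f x = 0}"

definition conv :: "('a, 'b) monoid_scheme \<Rightarrow> ('a \<Rightarrow> complex) \<Rightarrow> ('a \<Rightarrow> complex) \<Rightarrow> 'a \<Rightarrow> complex" where
  "conv G f g = (\<lambda>x. if x \<in> carrier G
      then (\<Sum>y\<in>carrier G. f y * g (inv\<^bsub>G\<^esub> y \<otimes>\<^bsub>G\<^esub> x)) else 0)"

definition delta :: "'a \<Rightarrow> 'a \<Rightarrow> complex" where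
  "delta h = (\<lambda>x. if x = h then 1 else 0)"

definition alg_conj :: "('a, 'b) monoid_scheme \<Rightarrow> 'a \<Rightarrow> ('a \<Rightarrow> complex) \<Rightarrow> 'a \<Rightarrow> complex" where
  "alg_conj G h f = conv G (conv G (delta h) f) (delta (inv\<^bsub>G\<^esub> h))"

definition stabilizer_alg :: "('a, 'b) monoid_scheme \<Rightarrow> 'a set \<Rightarrow> ('a \<Rightarrow> complex) \<Rightarrow> 'a set" where
  "stabilizer_alg G H v = {h \<in> H. alg_conj G h v = v}"

definition orbit_alg :: "('a, 'b) monoid_scheme \<Rightarrow> 'a set \<Rightarrow> ('a \<Rightarrow> complex) \<Rightarrow> ('a \<Rightarrow> complex) set" where
  "orbit_alg G H v = (\<lambda>h. alg_conj G h v) ` H"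

definition idem_eigenbasis :: "('a, 'b) monoid_scheme \<Rightarrow> 'a set \<Rightarrow> ('a \<Rightarrow> complex) set \<Rightarrow> bool" where
  "idem_eigenbasis G K P \<longleftrightarrow>
     finite P \<and> P \<subseteq> grp_alg G K \<and>
     (\<forall>f \<in> grp_alg G K. \<exists>c. f = (\<lambda>x. \<Sum>J\<in>P. c J * J x)) \<and>
     (\<forall>c. (\<lambda>x. \<Sum>J\<in>P. c J * J x) = (\<lambda>x. 0) \<longrightarrow> (\<forall>J\<in>P. c J = 0)) \<and>
     (\<forall>J\<in>P. \<forall>a \<in> grp_alg G K. \<exists>l::complex. conv G a J = (\<lambda>x. l * J x)) \<and>
     (\<forall>J\<in>P. conv G J J = J) \<and>
     (\<forall>J\<in>P. \<forall>J'\<in>P. J \<noteq> J' \<longrightarrow> conv G J J' = (\<lambda>x. 0))"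

definition idempotent_alg :: "('a, 'b) monoid_scheme \<Rightarrow> ('a \<Rightarrow> complex) \<Rightarrow> bool" where
  "idempotent_alg G e \<longleftrightarrow> e \<in> grp_alg G (carrier G) \<and> conv G e e = e"

definition primitive_idempotent :: "('a, 'b) monoid_scheme \<Rightarrow> ('a \<Rightarrow> complex) \<Rightarrow> bool" where
  "primitive_idempotent G e \<longleftrightarrow> idempotent_alg G e \<and>
     \<not> (\<exists>u1 u2. idempotent_alg G u1 \<and> idempotent_alg G u2 \<and>
          u1 \<noteq> (\<lambda>x. 0) \<and> u2 \<noteq> (\<lambda>x. 0) \<and>
          conv G u1 u2 = (\<lambda>x. 0) \<and> conv G u2 u1 = (\<lambda>x. 0) \<and>
          e = (\<lambda>x. u1 x + u2 x))"

end

theory Submission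
  imports Defs
begin


locale fgrp = group +
  assumes fin: "finite (carrier G)"
begin

lemma conv_out: "x \<notin> carrier G \<Longrightarrow> conv G f g x = 0"
  by (simp add: conv_def)

lemma conv_alg: "conv G f g \<in> grp_alg G (carrier G)"
  by (simp add: grp_alg_def conv_def)

lemma conv_assoc: "conv G (conv G f g) k = conv G f (conv G g k)"
proof
  fix x
  show "conv G (conv G f g) k x = conv G f (conv G g k) x"
  proof (cases "x \<in> carrier G")
    case False thus ?thesis by (simp add: conv_def)
  next
    case x: True
    have "conv G (conv G f g) k x = (\<Sum>y\<in>carrier G. (\<Sum>z\<in>carrier G. f z * g (inv z \<otimes> y)) * k (inv y \<otimes> x))"
      using x by (simp add: conv_def)
    also have "\<dots> = (\<Sum>z\<in>carrier G. f z * (\<Sum>y\<in>carrier G. g (inv z \<otimes> y) * k (inv y \<otimes> x)))"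
      by (simp add: sum_distrib_left sum_distrib_right mult.assoc) (rule sum.swap)
    also have "\<dots> = (\<Sum>z\<in>carrier G. f z * (\<Sum>w\<in>carrier G. g w * k (inv w \<otimes> (inv z \<otimes> x))))"
    proof (rule sum.cong[OF refl])
      fix z assume z: "z \<in> carrier G"
      have "(\<Sum>y\<in>carrier G. g (inv z \<otimes> y) * k (inv y \<otimes> x)) = (\<Sum>w\<in>carrier G. g (inv z \<otimes> (z \<otimes> w)) * k (inv (z \<otimes> w) \<otimes> x))"
      proof (rule sum.reindex_bij_witness[where j="\<lambda>y. inv z \<otimes> y" and i="\<lambda>w. z \<otimes> w"])
      qed (use z in \<open>auto simp: m_assoc[symmetric]\<close>)
      also have "\<dots> = (\<Sum>w\<in>carrier G. g w * k (inv w \<otimes> (inv z \<otimes> x)))"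
        using z x by (intro sum.cong) (auto simp: m_assoc[symmetric] inv_mult_group)
      finally show "f z * (\<Sum>y\<in>carrier G. g (inv z \<otimes> y) * k (inv y \<otimes> x)) = f z * (\<Sum>w\<in>carrier G. g w * k (inv w \<otimes> (inv z \<otimes> x)))" by simp
    qed
    also have "\<dots> = conv G f (conv G g k) x"
      using x by (simp add: conv_def)
    finally show ?thesis .
  qed
qed

lemma conv_delta_left: "a \<in> carrier G \<Longrightarrow> conv G (delta a) f = (\<lambda>x. if x \<in> carrier G then f (inv\<^bsub>G\<^esub> a \<otimes>\<^bsub>G\<^esub> x) else 0)"
proof
  fix x assume a: "a \<in> carrier G"
  show "conv G (delta a) f x = (if x \<in> carrier G then f (inv a \<otimes> x) else 0)"
  proof (cases "x \<in> carrier G")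
    case True
    have "conv G (delta a) f x = (\<Sum>y\<in>carrier G. if y = a then f (inv y \<otimes> x) else 0)"
      using True a unfolding conv_def delta_def by (auto intro!: sum.cong)
    then show ?thesis using True a fin by simp
  qed (simp add: conv_def)
qed

lemma conv_delta_right: assumes a: "a \<in> carrier G"
  shows "conv G f (delta a) = (\<lambda>x. if x \<in> carrier G then f (x \<otimes>\<^bsub>G\<^esub> inv\<^bsub>G\<^esub> a) else 0)"
proof
  fix x show "conv G f (delta a) x = (if x \<in> carrier G then f (x \<otimes>\<^bsub>G\<^esub> inv\<^bsub>G\<^esub> a) else 0)"
  proof (cases "x \<in> carrier G")
    case True
    have "conv G f (delta a) x = (\<Sum>y\<in>carrier G. if y = x \<otimes> inv a then f y else 0)"
      using True a unfolding conv_def delta_def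
      by (auto intro!: sum.cong simp: inv_solve_left' inv_solve_right)
    then show ?thesis using True a fin by simp
  qed (simp add: conv_def)
qed

lemma delta_mult: "a \<in> carrier G \<Longrightarrow> b \<in> carrier G \<Longrightarrow> conv G (delta a) (delta b) = delta (a \<otimes> b)"
  by (rule ext) (simp add: conv_delta_left, auto simp: delta_def inv_solve_left')

lemma delta_one_left: "f \<in> grp_alg G (carrier G) \<Longrightarrow> conv G (delta \<one>) f = f"
  by (rule ext) (auto simp: conv_delta_left grp_alg_def)

lemma delta_one_right: "f \<in> grp_alg G (carrier G) \<Longrightarrow> conv G f (delta \<one>) = f"
  by (rule ext) (auto simp: conv_delta_right grp_alg_def)

lemma delta_cancel1: "h \<in> carrier G \<Longrightarrow> Z \<in> grp_alg G (carrier G) \<Longrightarrow> conv G (delta (inv h)) (conv G (delta h) Z) = Z"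
  by (simp add: conv_assoc[symmetric] delta_mult delta_one_left)

lemma delta_cancel2: "h \<in> carrier G \<Longrightarrow> Z \<in> grp_alg G (carrier G) \<Longrightarrow> conv G (delta h) (conv G (delta (inv h)) Z) = Z"
  by (simp add: conv_assoc[symmetric] delta_mult delta_one_left)

lemma conv_sum_right: "finite T \<Longrightarrow> conv G f (\<lambda>x. \<Sum>b\<in>T. c b * k b x) = (\<lambda>x. \<Sum>b\<in>T. c b * conv G f (k b) x)"
  proof
  fix x assume fT: "finite T"
  show "conv G f (\<lambda>x. \<Sum>b\<in>T. c b * k b x) x = (\<Sum>b\<in>T. c b * conv G f (k b) x)"
  proof (cases "x \<in> carrier G")
    case True
    then show ?thesis unfolding conv_def by (simp add: sum_distrib_left mult_ac) (rule sum.swap)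
  qed (simp add: conv_def)
qed

lemma conv_sum_left: "finite T \<Longrightarrow> conv G (\<lambda>x. \<Sum>b\<in>T. c b * k b x) f = (\<lambda>x. \<Sum>b\<in>T. c b * conv G (k b) f x)"
  proof
  fix x assume fT: "finite T"
  show "conv G (\<lambda>x. \<Sum>b\<in>T. c b * k b x) f x = (\<Sum>b\<in>T. c b * conv G (k b) f x)"
  proof (cases "x \<in> carrier G")
    case True
    then show ?thesis unfolding conv_def by (simp add: sum_distrib_left sum_distrib_right mult_ac) (rule sum.swap)
  qed (simp add: conv_def)
qed

lemma conv_smult_left: "conv G (\<lambda>x. c * f x) g = (\<lambda>x. c * conv G f g x)"
  by (rule ext) (simp add: conv_def sum_distrib_left mult_ac)

lemma conv_smult_right: "conv G f (\<lambda>x. c * g x) = (\<lambda>x. c * conv G f g x)"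
  by (rule ext) (simp add: conv_def sum_distrib_left mult_ac)

lemma conv_add_left: "conv G (\<lambda>x. f x + g x) k = (\<lambda>x. conv G f k x + conv G g k x)"
  by (rule ext) (simp add: conv_def sum.distrib distrib_right)

lemma conv_zero_left: "conv G (\<lambda>x. 0) g = (\<lambda>x. 0)"
  by (rule ext) (simp add: conv_def)

lemma conv_zero_right: "conv G f (\<lambda>x. 0) = (\<lambda>x. 0)"
  by (rule ext) (simp add: conv_def)

lemma expand: assumes "T \<subseteq> carrier G" "f \<in> grp_alg G T"
  shows "f = (\<lambda>x. \<Sum>b\<in>T. f b * delta b x)"
proof
  fix x
  have fT: "finite T" using assms fin finite_subset by blast
  have "(\<Sum>b\<in>T. f b * delta b x) = (\<Sum>b\<in>T. if b = x then f b else 0)"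
    by (rule sum.cong) (auto simp: delta_def)
  also have "\<dots> = f x" using fT assms(2) by (simp add: sum.delta' grp_alg_def)
  finally show "f x = (\<Sum>b\<in>T. f b * delta b x)" by simp
qed

lemma comm: assumes T: "T \<subseteq> carrier G" and c: "\<forall>b\<in>T. conv G f (delta b) = conv G (delta b) f"
  and g: "g \<in> grp_alg G T"
  shows "conv G f g = conv G g f"
proof -
  have fT: "finite T" using T fin finite_subset by blast
  have eq: "g = (\<lambda>x. \<Sum>b\<in>T. g b * delta b x)" by (rule expand[OF T g])
  have "conv G f g = conv G f (\<lambda>x. \<Sum>b\<in>T. g b * delta b x)" using eq by (rule arg_cong)
  also have "\<dots> = (\<lambda>x. \<Sum>b\<in>T. g b * conv G f (delta b) x)" by (rule conv_sum_right[OF fT])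
  also have "\<dots> = (\<lambda>x. \<Sum>b\<in>T. g b * conv G (delta b) f x)" using c by simp
  also have "\<dots> = conv G (\<lambda>x. \<Sum>b\<in>T. g b * delta b x) f" by (rule conv_sum_left[OF fT, symmetric])
  also have "\<dots> = conv G g f" using eq[symmetric] by (rule arg_cong)
  finally show ?thesis .
qed

lemma conj_formula: "h \<in> carrier G \<Longrightarrow> alg_conj G h f = (\<lambda>x. if x \<in> carrier G then f (inv\<^bsub>G\<^esub> h \<otimes>\<^bsub>G\<^esub> x \<otimes>\<^bsub>G\<^esub> h) else 0)"
  by (rule ext) (simp add: alg_conj_def conv_delta_left conv_delta_right m_assoc)

lemma conj_alg: "alg_conj G h f \<in> grp_alg G (carrier G)"
  by (simp add: alg_conj_def conv_alg)

lemma conj_mult: assumes h: "h \<in> carrier G"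
  shows "alg_conj G h (conv G a b) = conv G (alg_conj G h a) (alg_conj G h b)"
  using h by (simp add: alg_conj_def conv_assoc delta_cancel1 conv_alg)

lemma conj_comp: "h \<in> carrier G \<Longrightarrow> k \<in> carrier G \<Longrightarrow> alg_conj G h (alg_conj G k f) = alg_conj G (h \<otimes> k) f"
  by (rule ext) (simp add: conj_formula inv_mult_group m_assoc)

lemma conj_one: "f \<in> grp_alg G (carrier G) \<Longrightarrow> alg_conj G \<one> f = f"
  by (rule ext) (auto simp: conj_formula grp_alg_def)

lemma conj_smult: "h \<in> carrier G \<Longrightarrow> alg_conj G h (\<lambda>x. c * f x) = (\<lambda>x. c * alg_conj G h f x)"
  by (rule ext) (simp add: conj_formula)

lemma conj_delta: assumes h: "h \<in> carrier G" and f: "f \<in> grp_alg G (carrier G)"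
  shows "conv G (delta h) f = conv G (alg_conj G h f) (delta h)"
  by (rule ext) (use h f in \<open>auto simp: conj_formula conv_delta_left conv_delta_right m_assoc grp_alg_def\<close>)

end


context fgrp begin

definition good :: "'a set \<Rightarrow> ('a \<Rightarrow> complex) \<Rightarrow> bool" where
  "good N v \<longleftrightarrow> v \<in> grp_alg G N \<and> conv G v v = v \<and> (\<forall>a\<in>grp_alg G N. \<exists>l. conv G a v = (\<lambda>x. l * v x))"

lemma alg_mono: "N \<subseteq> carrier G \<Longrightarrow> f \<in> grp_alg G N \<Longrightarrow> f \<in> grp_alg G (carrier G)"
  by (auto simp: grp_alg_def)

lemma conj_N: assumes N: "N \<lhd> G" and h: "h \<in> carrier G" and f: "f \<in> grp_alg G N"
  shows "alg_conj G h f \<in> grp_alg G N"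
  unfolding grp_alg_def
proof (intro CollectI allI impI)
  fix x assume x: "x \<notin> N"
  show "alg_conj G h f x = 0"
  proof (cases "x \<in> carrier G")
    case True
    have "inv h \<otimes> x \<otimes> h \<notin> N"
    proof
      assume "inv h \<otimes> x \<otimes> h \<in> N"
      then have "h \<otimes> (inv h \<otimes> x \<otimes> h) \<otimes> inv h \<in> N" using normal.inv_op_closed2[OF N h] by blast
      also have "h \<otimes> (inv h \<otimes> x \<otimes> h) \<otimes> inv h = x" using h True by (metis m_assoc inv_closed m_closed r_inv l_inv r_one l_one)
      finally show False using x by simp
    qed
    then show ?thesis using h f True by (simp add: conj_formula grp_alg_def)
  qed (simp add: conj_formula h)
qed

lemma conj_inv_cancel: "k \<in> carrier G \<Longrightarrow> a \<in> grp_alg G (carrier G) \<Longrightarrow> alg_conj G k (alg_conj G (inv k) a) = a"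
  by (simp add: conj_comp conj_one)

lemma conj_inv_cancel2: "k \<in> carrier G \<Longrightarrow> a \<in> grp_alg G (carrier G) \<Longrightarrow> alg_conj G (inv k) (alg_conj G k a) = a"
  by (simp add: conj_comp conj_one)

lemma good_conj: assumes N: "N \<lhd> G" and g: "good N v" and k: "k \<in> carrier G"
  shows "good N (alg_conj G k v)"
proof -
  have Nc: "N \<subseteq> carrier G" using N normal_imp_subgroup subgroup.subset by blast
  have v: "v \<in> grp_alg G N" "conv G v v = v" and e: "\<forall>a\<in>grp_alg G N. \<exists>l. conv G a v = (\<lambda>x. l * v x)"
    using g by (auto simp: good_def)
  have "\<exists>l. conv G a (alg_conj G k v) = (\<lambda>x. l * alg_conj G k v x)" if a: "a \<in> grp_alg G N" for a
  proof -
    have a': "alg_conj G (inv k) a \<in> grp_alg G N" using conj_N[OF N _ a] k by simp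
    obtain l where l: "conv G (alg_conj G (inv k) a) v = (\<lambda>x. l * v x)" using e a' by blast
    have "conv G a (alg_conj G k v) = conv G (alg_conj G k (alg_conj G (inv k) a)) (alg_conj G k v)"
      using conj_inv_cancel[OF k alg_mono[OF Nc a]] by simp
    also have "\<dots> = alg_conj G k (conv G (alg_conj G (inv k) a) v)" using conj_mult[OF k] by simp
    also have "\<dots> = (\<lambda>x. l * alg_conj G k v x)" using l conj_smult[OF k] by simp
    finally show ?thesis by blast
  qed
  then show ?thesis unfolding good_def using conj_N[OF N k v(1)] conj_mult[OF k, of v v] v(2) by simp
qed

lemma comm_N: assumes Nc: "N \<subseteq> carrier G" and ab: "\<forall>x\<in>N. \<forall>y\<in>N. x \<otimes> y = y \<otimes> x"
  and a: "a \<in> grp_alg G N" and b: "b \<in> grp_alg G N"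
  shows "conv G a b = conv G b a"
proof -
  have "conv G (delta n) a = conv G a (delta n)" if n: "n \<in> N" for n
  proof (rule comm[OF Nc _ a], intro ballI)
    fix b assume b: "b \<in> N"
    have "n \<in> carrier G" "b \<in> carrier G" using n b Nc by auto
    moreover have "n \<otimes> b = b \<otimes> n" using ab n b by blast
    ultimately show "conv G (delta n) (delta b) = conv G (delta b) (delta n)"
      by (simp add: delta_mult)
  qed
  then show ?thesis by (intro comm[OF Nc _ b]) auto
qed

lemma scal_eq: assumes "(\<lambda>x. a * f x) = (\<lambda>x. b * f x)" and "f \<noteq> (\<lambda>x. 0)"
  shows "a = (b::complex)"
proof -
  obtain x where "f x \<noteq> 0" using assms(2) by auto
  moreover have "a * f x = b * f x" using fun_cong[OF assms(1), of x] by simp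
  ultimately show ?thesis by simp
qed

lemma stab_eq: assumes Hs: "subgroup H G" and Hc: "\<forall>x\<in>H. \<forall>y\<in>H. x \<otimes> y = y \<otimes> x"
  and h: "h \<in> H" and k: "k \<in> H" and v0: "v0 \<in> grp_alg G (carrier G)"
  shows "alg_conj G h (alg_conj G k v0) = alg_conj G k v0 \<longleftrightarrow> alg_conj G h v0 = v0"
proof -
  have hc: "h \<in> carrier G" using Hs h by (rule subgroup.mem_carrier)
  have kc: "k \<in> carrier G" using Hs k by (rule subgroup.mem_carrier)
  have hk: "h \<otimes> k = k \<otimes> h" using Hc h k by blast
  have eq: "alg_conj G h (alg_conj G k v0) = alg_conj G k (alg_conj G h v0)"
    unfolding conj_comp[OF hc kc, of v0] conj_comp[OF kc hc, of v0] hk ..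
  show ?thesis
  proof
    assume a: "alg_conj G h (alg_conj G k v0) = alg_conj G k v0"
    have "alg_conj G h v0 = alg_conj G (inv k) (alg_conj G k (alg_conj G h v0))"
      using conj_inv_cancel2[OF kc conj_alg] by simp
    also have "\<dots> = alg_conj G (inv k) (alg_conj G k v0)" using a eq by simp
    also have "\<dots> = v0" using conj_inv_cancel2[OF kc v0] .
    finally show "alg_conj G h v0 = v0" .
  next
    assume "alg_conj G h v0 = v0"
    then show "alg_conj G h (alg_conj G k v0) = alg_conj G k v0" using eq by simp
  qed
qed

lemma orth: assumes N: "N \<lhd> G" and ab: "\<forall>x\<in>N. \<forall>y\<in>N. x \<otimes> y = y \<otimes> x"
  and g: "good N v" and h: "h \<in> carrier G" and ne: "alg_conj G h v \<noteq> v"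
  shows "conv G v (conv G (delta h) v) = (\<lambda>x. 0)"
proof -
  have Nc: "N \<subseteq> carrier G" using N normal_imp_subgroup subgroup.subset by blast
  define w where "w = alg_conj G (inv h) v"
  have gw: "good N w" unfolding w_def by (rule good_conj[OF N g]) (use h in simp)
  have vN: "v \<in> grp_alg G N" "conv G v v = v" and ev: "\<forall>a\<in>grp_alg G N. \<exists>l. conv G a v = (\<lambda>x. l * v x)"
    using g by (auto simp: good_def)
  have wN: "w \<in> grp_alg G N" "conv G w w = w" and ew: "\<forall>a\<in>grp_alg G N. \<exists>l. conv G a w = (\<lambda>x. l * w x)"
    using gw by (auto simp: good_def)
  have vG: "v \<in> grp_alg G (carrier G)" using alg_mono[OF Nc vN(1)] .
  have hw: "alg_conj G h w = v" unfolding w_def using h vG by (simp add: conj_comp conj_one)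
  have dw: "conv G (delta h) w = conv G v (delta h)"
    using conj_delta[OF h alg_mono[OF Nc wN(1)]] hw by simp
  have "conv G v (conv G (delta h) v) = conv G (conv G v (delta h)) v" by (simp add: conv_assoc)
  also have "\<dots> = conv G (conv G (delta h) w) v" using dw by simp
  also have "\<dots> = conv G (delta h) (conv G w v)" by (simp add: conv_assoc)
  finally have red: "conv G v (conv G (delta h) v) = conv G (delta h) (conv G w v)" .
  have wv0: "conv G w v = (\<lambda>x. 0)"
  proof (cases "v = (\<lambda>x. 0)")
    case True then show ?thesis by (simp add: conv_zero_right)
  next
    case vnz: False
    obtain l where l: "conv G w v = (\<lambda>x. l * v x)" using ev wN(1) by blast
    obtain m where m: "conv G v w = (\<lambda>x. m * w x)" using ew vN(1) by blast
    have cm: "conv G w v = conv G v w" using comm_N[OF Nc ab wN(1) vN(1)] .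
    have "conv G w (conv G w v) = conv G (conv G w w) v" by (simp add: conv_assoc)
    then have "conv G w (conv G w v) = conv G w v" using wN(2) by simp
    then have "(\<lambda>x. (l * l) * v x) = (\<lambda>x. l * v x)" using l by (simp add: conv_smult_right mult.assoc)
    then have "l * l = l" using vnz by (rule scal_eq)
    then have "l = 0 \<or> l = 1" by (metis mult_cancel_right2 mult_eq_0_iff)
    then show ?thesis
    proof
      assume "l = 0" then show ?thesis using l by simp
    next
      assume l1: "l = 1"
      then have vm: "v = (\<lambda>x. m * w x)" using l m cm by simp
      have wnz: "w \<noteq> (\<lambda>x. 0)" using vm vnz by auto
      have "(\<lambda>x. m * w x) = conv G v v" using vm vN(2) by simp
      also have "\<dots> = (\<lambda>x. (m * m) * w x)" using vm wN(2) by (simp add: conv_smult_left conv_smult_right mult.assoc)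
      finally have "m * m = m" using wnz by (metis scal_eq)
      then have "m = 0 \<or> m = 1" by (metis mult_cancel_right2 mult_eq_0_iff)
      then have "v = w" using vm vnz by auto
      then have "alg_conj G h v = v" using hw by simp
      then show ?thesis using ne by simp
    qed
  qed
  show ?thesis using red wv0 by (simp add: conv_zero_right)
qed

end


context fgrp begin

lemma conv_add_right: "conv G k (\<lambda>x. f x + g x) = (\<lambda>x. conv G k f x + conv G k g x)"
  by (rule ext) (simp add: conv_def sum.distrib distrib_left)

lemma corner_to_prim:
  assumes eG: "e \<in> grp_alg G (carrier G)" and ee: "conv G e e = e"
    and corner: "\<forall>g\<in>carrier G. \<exists>c. conv G e (conv G (delta g) e) = (\<lambda>x. c * e x)"
  shows "primitive_idempotent G e"
proof -
  have fC: "finite (carrier G)" by (rule fin)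
  have cf: "\<exists>c. conv G e (conv G f e) = (\<lambda>x. c * e x)" if f: "f \<in> grp_alg G (carrier G)" for f
  proof -
    obtain K where K: "\<forall>g\<in>carrier G. conv G e (conv G (delta g) e) = (\<lambda>x. K g * e x)"
      using bchoice[OF corner] by blast
    have eq: "f = (\<lambda>x. \<Sum>b\<in>carrier G. f b * delta b x)" by (rule expand[OF subset_refl f])
    have "conv G e (conv G f e) = conv G e (conv G (\<lambda>x. \<Sum>b\<in>carrier G. f b * delta b x) e)"
      using eq by (rule arg_cong)
    also have "\<dots> = (\<lambda>x. \<Sum>b\<in>carrier G. f b * conv G e (conv G (delta b) e) x)"
      by (simp add: conv_sum_left[OF fC] conv_sum_right[OF fC])
    also have "\<dots> = (\<lambda>x. \<Sum>b\<in>carrier G. f b * (K b * e x))"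
      using K by (intro ext sum.cong) auto
    also have "\<dots> = (\<lambda>x. (\<Sum>b\<in>carrier G. f b * K b) * e x)"
      by (simp add: sum_distrib_right mult.assoc)
    finally show ?thesis by blast
  qed
  show ?thesis unfolding primitive_idempotent_def
  proof (intro conjI notI)
    show "idempotent_alg G e" using eG ee by (simp add: idempotent_alg_def)
  next
    assume "\<exists>u1 u2. idempotent_alg G u1 \<and> idempotent_alg G u2 \<and>
          u1 \<noteq> (\<lambda>x. 0) \<and> u2 \<noteq> (\<lambda>x. 0) \<and>
          conv G u1 u2 = (\<lambda>x. 0) \<and> conv G u2 u1 = (\<lambda>x. 0) \<and>
          e = (\<lambda>x. u1 x + u2 x)"
    then obtain u1 u2 where u1: "u1 \<in> grp_alg G (carrier G)" "conv G u1 u1 = u1"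
      and u2: "u2 \<in> grp_alg G (carrier G)" "conv G u2 u2 = u2"
      and nz: "u1 \<noteq> (\<lambda>x. 0)" "u2 \<noteq> (\<lambda>x. 0)"
      and o: "conv G u1 u2 = (\<lambda>x. 0)" "conv G u2 u1 = (\<lambda>x. 0)"
      and es: "e = (\<lambda>x. u1 x + u2 x)"
      unfolding idempotent_alg_def by blast
    have eu1: "conv G e u1 = u1" using es u1 o by (simp add: conv_add_left)
    have u1e: "conv G u1 e = u1" using es u1 o by (simp add: conv_add_right)
    obtain c where c: "conv G e (conv G u1 e) = (\<lambda>x. c * e x)" using cf[OF u1(1)] by blast
    have u1c: "u1 = (\<lambda>x. c * e x)" using c u1e eu1 by simp
    have enz: "e \<noteq> (\<lambda>x. 0)" using u1c nz(1) by auto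
    have "(\<lambda>x. c * e x) = (\<lambda>x. (c * c) * e x)"
      using u1(2) u1c ee by (simp add: conv_smult_left conv_smult_right mult.assoc)
    then have "c = c * c" using enz by (rule scal_eq)
    then have "c = 0 \<or> c = 1" by (metis mult_cancel_right2 mult_eq_0_iff)
    then show False
    proof
      assume "c = 0" then show False using u1c nz(1) by simp
    next
      assume "c = 1" then have "u1 = e" using u1c by simp
      then have "u2 = (\<lambda>x. 0)" using es by (metis add_cancel_right_right)
      then show False using nz(2) by simp
    qed
  qed
qed

end


theorem mainTheorem6:
  fixes G :: "('a, 'b) monoid_scheme" and N H :: "'a set"
    and PN U :: "('a \<Rightarrow> complex) set" and v0 va vi u :: "'a \<Rightarrow> complex"
  assumes "group G" and "finite (carrier G)"
    and "N \<lhd> G" and "subgroup H G"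
    and "N <#>\<^bsub>G\<^esub> H = carrier G" and "N \<inter> H = {\<one>\<^bsub>G\<^esub>}"
    and "\<forall>x\<in>N. \<forall>y\<in>N. x \<otimes>\<^bsub>G\<^esub> y = y \<otimes>\<^bsub>G\<^esub> x"
    and "\<forall>x\<in>H. \<forall>y\<in>H. x \<otimes>\<^bsub>G\<^esub> y = y \<otimes>\<^bsub>G\<^esub> x"
    and "idem_eigenbasis G N PN"
    and "v0 \<in> PN"
    and "va \<in> orbit_alg G H v0"
    and "idem_eigenbasis G (stabilizer_alg G H va) U"
    and "vi \<in> orbit_alg G H v0"
    and "u \<in> U"
  shows "primitive_idempotent G (conv G vi u)"
proof -
  interpret fgrp G using assms(1,2) by (simp add: fgrp_def fgrp_axioms_def)
  note Nn = assms(3) and Hs = assms(4) and NH = assms(5) and ab = assms(7) and Hab = assms(8)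
  have Nc: "N \<subseteq> carrier G" using Nn normal_imp_subgroup subgroup.subset by blast
  have Hc: "H \<subseteq> carrier G" using Hs subgroup.subset by blast
  have P1: "PN \<subseteq> grp_alg G N" and P2: "\<forall>J\<in>PN. \<forall>a \<in> grp_alg G N. \<exists>l::complex. conv G a J = (\<lambda>x. l * J x)"
    and P3: "\<forall>J\<in>PN. conv G J J = J" using assms(9) unfolding idem_eigenbasis_def by auto
  have g0: "good N v0" unfolding good_def using P1 P2 P3 assms(10) by blast
  have v0G: "v0 \<in> grp_alg G (carrier G)" using g0 alg_mono[OF Nc] by (simp add: good_def)
  obtain k where k: "k \<in> H" and vik: "vi = alg_conj G k v0" using assms(13) unfolding orbit_alg_def by blast
  obtain j where j: "j \<in> H" and vaj: "va = alg_conj G j v0" using assms(11) unfolding orbit_alg_def by blast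
  have kc: "k \<in> carrier G" using k Hc by blast
  have gv: "good N vi" unfolding vik by (rule good_conj[OF Nn g0 kc])
  have viN: "vi \<in> grp_alg G N" and vv: "conv G vi vi = vi"
    and evi: "\<forall>a\<in>grp_alg G N. \<exists>l. conv G a vi = (\<lambda>x. l * vi x)" using gv by (auto simp: good_def)
  have viG: "vi \<in> grp_alg G (carrier G)" using alg_mono[OF Nc viN] .
  define S where "S = stabilizer_alg G H va"
  have Sdef: "s \<in> S \<longleftrightarrow> s \<in> H \<and> alg_conj G s vi = vi" for s
  proof (cases "s \<in> H")
    case True
    have "alg_conj G s va = va \<longleftrightarrow> alg_conj G s v0 = v0" unfolding vaj by (rule stab_eq[OF Hs Hab True j v0G])
    moreover have "alg_conj G s vi = vi \<longleftrightarrow> alg_conj G s v0 = v0" unfolding vik by (rule stab_eq[OF Hs Hab True k v0G])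
    ultimately show ?thesis by (simp add: S_def stabilizer_alg_def)
  qed (simp add: S_def stabilizer_alg_def)
  have Sc: "S \<subseteq> carrier G" using Sdef Hc by blast
  have U1: "U \<subseteq> grp_alg G S" and U2: "\<forall>J\<in>U. \<forall>a \<in> grp_alg G S. \<exists>l::complex. conv G a J = (\<lambda>x. l * J x)"
    and U3: "\<forall>J\<in>U. conv G J J = J" using assms(12) unfolding idem_eigenbasis_def S_def by auto
  have uS: "u \<in> grp_alg G S" and uu: "conv G u u = u"
    and eu: "\<forall>a\<in>grp_alg G S. \<exists>l. conv G a u = (\<lambda>x. l * u x)"
    using U1 U2 U3 assms(14) by blast+
  have comm_s: "conv G vi (delta s) = conv G (delta s) vi" if s: "s \<in> S" for s
  proof -
    have sc: "s \<in> carrier G" using s Sc by blast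
    have "alg_conj G s vi = vi" using s Sdef by blast
    then show ?thesis using conj_delta[OF sc viG] by simp
  qed
  have vu: "conv G vi u = conv G u vi" by (rule comm[OF Sc _ uS]) (use comm_s in blast)
  define e where "e = conv G vi u"
  have eu': "e = conv G u vi" using vu e_def by simp
  have eG: "e \<in> grp_alg G (carrier G)" unfolding e_def by (rule conv_alg)
  have ee: "conv G e e = e"
  proof -
    have "conv G e e = conv G vi (conv G (conv G u vi) u)" unfolding e_def by (simp add: conv_assoc)
    also have "\<dots> = conv G vi (conv G (conv G vi u) u)" using vu by simp
    also have "\<dots> = conv G (conv G vi vi) (conv G u u)" by (simp add: conv_assoc)
    also have "\<dots> = e" using vv uu e_def by simp
    finally show ?thesis .
  qed
  have corner: "\<forall>g\<in>carrier G. \<exists>c. conv G e (conv G (delta g) e) = (\<lambda>x. c * e x)"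
  proof
    fix g assume g: "g \<in> carrier G"
    then obtain n h where n: "n \<in> N" and h: "h \<in> H" and gnh: "g = n \<otimes>\<^bsub>G\<^esub> h"
      using NH unfolding set_mult_def by blast
    have nc: "n \<in> carrier G" and hc: "h \<in> carrier G" using n h Nc Hc by auto
    have dn: "delta n \<in> grp_alg G N" using n by (simp add: grp_alg_def delta_def)
    obtain lam where lam: "conv G (delta n) vi = (\<lambda>x. lam * vi x)" using evi dn by blast
    have vn: "conv G vi (delta n) = (\<lambda>x. lam * vi x)"
      using comm_N[OF Nc ab viN dn] lam by simp
    have "conv G e (conv G (delta g) e) = conv G u (conv G (conv G vi (delta n)) (conv G (delta h) e))"
      unfolding gnh using eu' by (simp add: delta_mult[OF nc hc, symmetric] conv_assoc)
    also have "\<dots> = (\<lambda>x. lam * conv G u (conv G vi (conv G (delta h) e)) x)"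
      unfolding vn by (simp add: conv_smult_left conv_smult_right)
    finally have step1: "conv G e (conv G (delta g) e) = (\<lambda>x. lam * conv G u (conv G vi (conv G (delta h) e)) x)" .
    show "\<exists>c. conv G e (conv G (delta g) e) = (\<lambda>x. c * e x)"
    proof (cases "h \<in> S")
      case True
      have dh: "delta h \<in> grp_alg G S" using True by (simp add: grp_alg_def delta_def)
      obtain mu where mu: "conv G (delta h) u = (\<lambda>x. mu * u x)" using eu dh by blast
      have "conv G vi (conv G (delta h) e) = conv G (conv G vi (delta h)) e" by (simp add: conv_assoc)
      also have "\<dots> = conv G (conv G (delta h) vi) e" using comm_s[OF True] by simp
      also have "\<dots> = conv G (delta h) (conv G (conv G vi vi) u)" unfolding e_def by (simp add: conv_assoc)
      also have "\<dots> = conv G (conv G (delta h) u) vi" using vv vu by (simp add: conv_assoc)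
      also have "\<dots> = (\<lambda>x. mu * e x)" using mu eu' by (simp add: conv_smult_left)
      finally have "conv G vi (conv G (delta h) e) = (\<lambda>x. mu * e x)" .
      then have "conv G u (conv G vi (conv G (delta h) e)) = (\<lambda>x. mu * conv G u e x)"
        by (simp add: conv_smult_right)
      moreover have "conv G u e = e" unfolding eu' using uu by (simp add: conv_assoc[symmetric])
      ultimately have "conv G u (conv G vi (conv G (delta h) e)) = (\<lambda>x. mu * e x)" by simp
      then show ?thesis using step1 by (intro exI[of _ "lam * mu"]) (simp add: mult.assoc)
    next
      case False
      have ne: "alg_conj G h vi \<noteq> vi" using False h Sdef by blast
      have z: "conv G vi (conv G (delta h) vi) = (\<lambda>x. 0)" by (rule orth[OF Nn ab gv hc ne])
      have "conv G vi (conv G (delta h) e) = conv G (conv G vi (conv G (delta h) vi)) u"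
        unfolding e_def by (simp add: conv_assoc)
      also have "\<dots> = (\<lambda>x. 0)" using z by (simp add: conv_zero_left)
      finally show ?thesis using step1 by (intro exI[of _ 0]) (simp add: conv_zero_right)
    qed
  qed
  show ?thesis using corner_to_prim[OF eG ee corner] unfolding e_def .
qed


end
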